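(* For every $(\zeta_1,\zeta_2,\zeta_3)\in\mathbb{R}^3$ satisfying $0<\zeta_3<\zeta_2<\zeta_1$, there exists a unique choice of $(\zeta_1,\alpha,k)\in(0,\infty)\times(0,K(k))\times(0,1)$ in the transformation $$\zeta_1=\zeta_1,\qquad \zeta_2=\zeta_1\,\mathrm{dn}(2\alpha),\qquad \zeta_3=\zeta_1\,\mathrm{cn}(2\alpha),$$ (Jacobi functions of modulus $k$), which also implies $\nu:=\sqrt{\zeta_1^2-\zeta_3^2}=\zeta_1\,\mathrm{sn}(2\alpha)$. For $\zeta_1=1$, the bounded periodic profile $\phi$ (the solution of $\phi''-2\phi^3+c\phi=b$ with $b=4\zeta_1\zeta_2\zeta_3$, $c=2(\zeta_1^2+\zeta_2^2+\zeta_3^2)$ described in the context) can be uniquely expressed by $$\phi(x)=(\mathrm{dn}(2\alpha)+\mathrm{cn}(2\alpha))\frac{1+k^2\mathrm{sn}^2(\alpha)\,\mathrm{sn}^2(\mathrm{sn}(2\alpha)x)}{1-k^2\mathrm{sn}^2(\alpha)\,\mathrm{sn}^2(\mathrm{sn}(2\alpha)x)}-1,$$ where $\alpha\in(0,K)$ and $k\in(0,1)$ are two arbitrary parameters.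
   Context: $K(k)$ is the complete elliptic integral of the first kind and $\mathrm{sn},\mathrm{cn},\mathrm{dn}$ are Jacobi elliptic functions of modulus $k$. For $0<\zeta_3<\zeta_2<\zeta_1$, the profile $\phi$ referred to is the bounded periodic solution of $\phi''-2\phi^3+c\phi=b$, $(\phi')^2=\phi^4-c\phi^2+2b\phi+2d$, with $b=4\zeta_1\zeta_2\zeta_3$, $c=2(\zeta_1^2+\zeta_2^2+\zeta_3^2)$, $d=\tfrac12(\zeta_1^4+\zeta_2^4+\zeta_3^4)-\zeta_1^2\zeta_2^2-\zeta_1^2\zeta_3^2-\zeta_2^2\zeta_3^2$, given by $$\phi(x)=\frac{2(\zeta_1+\zeta_3)(\zeta_2+\zeta_3)}{(\zeta_1+\zeta_3)-(\zeta_1-\zeta_2)\mathrm{sn}^2(\nu x)}-\zeta_1-\zeta_2-\zeta_3,$$ with $\nu=\sqrt{\zeta_1^2-\zeta_3^2}$ and modulus $k=\sqrt{(\zeta_1^2-\zeta_2^2)/(\zeta_1^2-\zeta_3^2)}$, and $\alpha\in(0,K)$ defined by $\mathrm{sn}(\alpha)=\sqrt{(\zeta_1-\zeta_3)/(\zeta_1+\zeta_2)}$. *)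

theory Defs
  imports "HOL-Analysis.Analysis"
begin

definition ellipticF :: "real \<Rightarrow> real \<Rightarrow> real" where
  "ellipticF k \<phi> =
     (if 0 \<le> \<phi> then integral {0..\<phi>} (\<lambda>\<theta>. 1 / sqrt (1 - k\<^sup>2 * (sin \<theta>)\<^sup>2))
      else - integral {\<phi>..0} (\<lambda>\<theta>. 1 / sqrt (1 - k\<^sup>2 * (sin \<theta>)\<^sup>2)))"

definition ellipticK :: "real \<Rightarrow> real" where
  "ellipticK k = ellipticF k (pi / 2)"

definition jam :: "real \<Rightarrow> real \<Rightarrow> real" where
  "jam k u = (THE \<phi>. ellipticF k \<phi> = u)"

definition jsn :: "real \<Rightarrow> real \<Rightarrow> real" where
  "jsn k u = sin (jam k u)"

definition jcn :: "real \<Rightarrow> real \<Rightarrow> real" where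
  "jcn k u = cos (jam k u)"

definition jdn :: "real \<Rightarrow> real \<Rightarrow> real" where
  "jdn k u = sqrt (1 - k\<^sup>2 * (jsn k u)\<^sup>2)"

text \<open>The bounded periodic profile phi of the context, for 0 < z3 < z2 < z1, with
  nu = sqrt(z1^2 - z3^2) and modulus sqrt((z1^2-z2^2)/(z1^2-z3^2)).\<close>
definition profile :: "real \<Rightarrow> real \<Rightarrow> real \<Rightarrow> real \<Rightarrow> real" where
  "profile z1 z2 z3 x =
     (let \<nu> = sqrt (z1\<^sup>2 - z3\<^sup>2);
          m = sqrt ((z1\<^sup>2 - z2\<^sup>2) / (z1\<^sup>2 - z3\<^sup>2))
      in 2 * (z1 + z3) * (z2 + z3) / ((z1 + z3) - (z1 - z2) * (jsn m (\<nu> * x))\<^sup>2)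
         - z1 - z2 - z3)"

end

theory Submission imports Defs begin

definition fe :: "real \<Rightarrow> real \<Rightarrow> real" where
  "fe k t = 1 / sqrt (1 - k\<^sup>2 * (sin t)\<^sup>2)"

lemma inner_pos:
  fixes k t :: real assumes "0 < k" "k < 1"
  shows "0 < 1 - k\<^sup>2 * (sin t)\<^sup>2"
proof -
  have "(sin t)\<^sup>2 \<le> 1" by (simp add: abs_square_le_1)
  moreover have "k\<^sup>2 < 1" using assms by (simp add: power_less_one_iff abs_less_iff)
  moreover have "0 \<le> k\<^sup>2" by simp
  ultimately have "k\<^sup>2 * (sin t)\<^sup>2 < 1"
    by (metis mult_left_le order_le_less_trans)
  then show ?thesis by simp
qed

lemma fe_ge1:
  assumes "0 < k" "k < 1" shows "1 \<le> fe k t"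
proof -
  have p: "0 < 1 - k\<^sup>2 * (sin t)\<^sup>2" by (rule inner_pos[OF assms])
  have "1 - k\<^sup>2 * (sin t)\<^sup>2 \<le> 1" by simp
  then have "sqrt (1 - k\<^sup>2 * (sin t)\<^sup>2) \<le> 1" by simp
  moreover have "0 < sqrt (1 - k\<^sup>2 * (sin t)\<^sup>2)" using p by simp
  ultimately show ?thesis unfolding fe_def by simp
qed

lemma fe_cont: assumes "0 < k" "k < 1" shows "continuous_on S (fe k)"
  unfolding fe_def using inner_pos[OF assms]
  by (intro continuous_intros) (auto simp: less_imp_le, metis less_irrefl)

lemma F_eq:
  assumes "0 < k" "k < 1" "a \<le> 0" "a \<le> u"
  shows "ellipticF k u = integral {a..u} (fe k) - integral {a..0} (fe k)"
proof -
  have fun_eq: "(\<lambda>\<theta>. 1 / sqrt (1 - k\<^sup>2 * (sin \<theta>)\<^sup>2)) = fe k" by (simp add: fe_def fun_eq_iff)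
  have int: "fe k integrable_on {x..y}" for x y
    by (rule integrable_continuous_real) (rule fe_cont[OF assms(1,2)])
  show ?thesis
  proof (cases "0 \<le> u")
    case True
    then show ?thesis using Henstock_Kurzweil_Integration.integral_combine[OF assms(3) True int[of a u]]
      by (simp add: ellipticF_def fun_eq)
  next
    case False
    then show ?thesis using Henstock_Kurzweil_Integration.integral_combine[OF assms(4) _ int[of a 0]] False
      by (simp add: ellipticF_def fun_eq)
  qed
qed

lemma F_deriv:
  assumes "0 < k" "k < 1"
  shows "(ellipticF k has_real_derivative fe k x) (at x)"
proof -
  define a where "a = - \<bar>x\<bar> - 1"
  define b where "b = \<bar>x\<bar> + 1"
  have "((\<lambda>u. integral {a..u} (fe k)) has_real_derivative fe k x) (at x within {a..b})"
    by (rule integral_has_real_derivative) (auto simp: a_def b_def fe_cont[OF assms])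
  then have "((\<lambda>u. integral {a..u} (fe k)) has_real_derivative fe k x) (at x within {a<..<b})"
    by (rule DERIV_subset) auto
  then have d: "((\<lambda>u. integral {a..u} (fe k)) has_real_derivative fe k x) (at x)"
    by (subst (asm) at_within_open) (auto simp: a_def b_def)
  have "((\<lambda>u. integral {a..u} (fe k) - integral {a..0} (fe k)) has_real_derivative fe k x) (at x)"
    using d by (auto intro: derivative_eq_intros)
  then show ?thesis
    by (rule has_field_derivative_transform_within_open[where S="{a<..<b}"])
       (auto simp: a_def b_def F_eq[OF assms] intro!: sym[OF F_eq[OF assms]])
qed

lemma F_cont: assumes "0 < k" "k < 1" shows "isCont (ellipticF k) x"
  using F_deriv[OF assms] DERIV_isCont by blast

lemma F_0: "ellipticF k 0 = 0"
  by (simp add: ellipticF_def)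

lemma F_strict:
  assumes "0 < k" "k < 1" "x < y" shows "ellipticF k x < ellipticF k y"
  by (rule DERIV_pos_imp_increasing[OF assms(3)])
     (metis F_deriv[OF assms(1,2)] fe_ge1[OF assms(1,2)] less_le_trans zero_less_one)

lemma F_inj:
  assumes "0 < k" "k < 1" "ellipticF k x = ellipticF k y" shows "x = y"
  using F_strict[OF assms(1,2), of x y] F_strict[OF assms(1,2), of y x] assms(3)
  by (cases x y rule: linorder_cases) auto

lemma F_less_iff:
  assumes "0 < k" "k < 1" shows "ellipticF k x < ellipticF k y \<longleftrightarrow> x < y"
  using F_strict[OF assms, of x y] F_strict[OF assms, of y x] F_inj[OF assms, of x y]
  by (cases x y rule: linorder_cases) auto

lemma F_minus_mono:
  assumes "0 < k" "k < 1" "x \<le> y" shows "ellipticF k x - x \<le> ellipticF k y - y"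
proof -
  have "\<exists>z. ((\<lambda>t. ellipticF k t - t) has_real_derivative z) (at t) \<and> 0 \<le> z" for t
    using F_deriv[OF assms(1,2), of t] fe_ge1[OF assms(1,2), of t]
    by (intro exI[of _ "fe k t - 1"]) (auto intro!: derivative_eq_intros)
  then show ?thesis
    using DERIV_nonneg_imp_nondecreasing[OF assms(3), of "\<lambda>t. ellipticF k t - t"] by blast
qed

lemma F_surj:
  assumes "0 < k" "k < 1" shows "\<exists>x. ellipticF k x = u"
proof (cases "0 \<le> u")
  case True
  have "ellipticF k 0 \<le> u" "u \<le> ellipticF k u"
    using True F_minus_mono[OF assms True] by (auto simp: F_0)
  then show ?thesis using IVT[of "ellipticF k" 0 u u] True F_cont[OF assms] by blast
next
  case False
  have "ellipticF k u \<le> u" "u \<le> ellipticF k 0"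
    using False F_minus_mono[OF assms, of u 0] by (auto simp: F_0)
  then show ?thesis using IVT[of "ellipticF k" u u 0] False F_cont[OF assms] by auto
qed

lemma jam_F: assumes "0 < k" "k < 1" shows "jam k (ellipticF k x) = x"
  unfolding jam_def using F_inj[OF assms] by (intro the_equality) auto

lemma F_jam: assumes "0 < k" "k < 1" shows "ellipticF k (jam k u) = u"
  using F_surj[OF assms, of u] jam_F[OF assms] by auto


lemma F_pi:
  assumes "0 < k" "k < 1" shows "ellipticF k pi = 2 * ellipticK k"
proof -
  let ?G = "\<lambda>x. ellipticF k (pi/2 + x) + ellipticF k (pi/2 - x)"
  have "\<forall>x. (?G has_real_derivative 0) (at x)"
  proof
    fix x
    have "(?G has_real_derivative fe k (pi/2 + x) * 1 + fe k (pi/2 - x) * (-1)) (at x)"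
      by (rule derivative_eq_intros DERIV_chain2[OF F_deriv[OF assms]] | simp)+
    moreover have "fe k (pi/2 + x) = fe k (pi/2 - x)"
      by (simp add: fe_def sin_add sin_diff)
    ultimately show "(?G has_real_derivative 0) (at x)" by simp
  qed
  then have "?G (pi/2) = ?G 0" by (rule DERIV_isconst_all)
  then show ?thesis by (simp add: F_0 ellipticK_def)
qed

lemma K_pos: assumes "0 < k" "k < 1" shows "0 < ellipticK k"
  using F_strict[OF assms, of 0 "pi/2"] by (simp add: F_0 ellipticK_def)

lemma jam_range:
  assumes "0 < k" "k < 1" "0 < u" "u < 2 * ellipticK k"
  shows "0 < jam k u" "jam k u < pi"
  using F_less_iff[OF assms(1,2), of 0 "jam k u"] F_less_iff[OF assms(1,2), of "jam k u" pi]
    assms F_jam[OF assms(1,2), of u] F_pi[OF assms(1,2)] F_0 by auto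


definition Dk :: "real \<Rightarrow> real \<Rightarrow> real" where
  "Dk k t = sqrt (1 - k\<^sup>2 * (sin t)\<^sup>2)"
definition Pk :: "real \<Rightarrow> real \<Rightarrow> real" where
  "Pk k t = (Dk k t + cos t) * (1 + cos t)"
definition hk :: "real \<Rightarrow> real \<Rightarrow> real" where
  "hk k t = arctan (sin t / sqrt (Pk k t))"

lemma Dk_pos: assumes "0 < k" "k < 1" shows "0 < Dk k t"
  using inner_pos[OF assms] by (simp add: Dk_def)

lemma Dk_sq: assumes "0 < k" "k < 1" shows "(Dk k t)\<^sup>2 = 1 - k\<^sup>2 * (sin t)\<^sup>2"
  using inner_pos[OF assms, of t] by (simp add: Dk_def)

lemma Dk_deriv:
  assumes "0 < k" "k < 1"
  shows "(Dk k has_real_derivative (- (k\<^sup>2 * sin t * cos t) / Dk k t)) (at t)"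
proof -
  have i: "((\<lambda>t. 1 - k\<^sup>2 * (sin t)\<^sup>2) has_real_derivative (- (k\<^sup>2 * (2 * sin t * cos t)))) (at t)"
    by (auto intro!: derivative_eq_intros simp: power2_eq_square)
  have "((\<lambda>t. sqrt (1 - k\<^sup>2 * (sin t)\<^sup>2)) has_real_derivative
          inverse (sqrt (1 - k\<^sup>2 * (sin t)\<^sup>2)) / 2 * (- (k\<^sup>2 * (2 * sin t * cos t)))) (at t)"
    by (rule DERIV_chain2[OF DERIV_real_sqrt[OF inner_pos[OF assms]] i])
  then show ?thesis
    by (simp add: Dk_def[abs_def] field_simps)
qed

lemma Pk_deriv:
  assumes "0 < k" "k < 1"
  shows "(Pk k has_real_derivative
     ((- (k\<^sup>2 * sin t * cos t) / Dk k t - sin t) * (1 + cos t) + (Dk k t + cos t) * (- sin t))) (at t)"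
  unfolding Pk_def[abs_def]
  by (auto intro!: derivative_eq_intros Dk_deriv[OF assms])

lemma hk_deriv:
  assumes "0 < k" "k < 1" "0 < Pk k t"
  defines "P' \<equiv> (- (k\<^sup>2 * sin t * cos t) / Dk k t - sin t) * (1 + cos t) + (Dk k t + cos t) * (- sin t)"
  defines "y \<equiv> sin t / sqrt (Pk k t)"
  defines "y' \<equiv> (cos t * sqrt (Pk k t) - sin t * (inverse (sqrt (Pk k t)) / 2 * P')) / (sqrt (Pk k t))\<^sup>2"
  shows "(hk k has_real_derivative inverse (1 + y\<^sup>2) * y') (at t)"
proof -
  have q: "((\<lambda>t. sqrt (Pk k t)) has_real_derivative inverse (sqrt (Pk k t)) / 2 * P') (at t)"
    unfolding P'_def by (rule DERIV_chain2[OF DERIV_real_sqrt[OF assms(3)] Pk_deriv[OF assms(1,2)]])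
  have "((\<lambda>t. sin t / sqrt (Pk k t)) has_real_derivative y') (at t)"
    unfolding y'_def
    using DERIV_divide[OF DERIV_sin q] assms(3) by (simp add: power2_eq_square)
  from DERIV_chain2[OF DERIV_arctan this] show ?thesis
    unfolding hk_def[abs_def] y_def .
qed


lemma key_alg:
  fixes s c d k P P' :: real
  assumes "s\<^sup>2 + c\<^sup>2 = 1" "d\<^sup>2 = 1 - k\<^sup>2 * s\<^sup>2" "P = (d + c) * (1 + c)"
    "P' * d = (- (k\<^sup>2 * s * c) - s * d) * (1 + c) - (d + c) * s * d"
  shows "(2 * c * P - s * P') * d = P * (1 + d)"
  using assms by algebra

lemma alg2:
  fixes m n q P N :: real
  assumes "0 < m" "0 < n" "0 < q" "0 < P"
  shows "2 * (m / q * (inverse (m * n / P) * (N / (2 * q * P)))) = N / ((q * q) * n)"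
  using assms by (simp add: field_simps)

lemma half_deriv:
  assumes "0 < k" "k < 1" "0 \<le> cos t"
  shows "((\<lambda>t. 2 * ellipticF k (hk k t) - ellipticF k t) has_real_derivative 0) (at t)"
proof -
  define s where "s = sin t"
  define c where "c = cos t"
  define d where "d = Dk k t"
  define P where "P = Pk k t"
  define q where "q = sqrt P"
  define P' where "P' \<equiv> (- (k\<^sup>2 * sin t * cos t) / Dk k t - sin t) * (1 + cos t) + (Dk k t + cos t) * (- sin t)"
  define y where "y \<equiv> sin t / sqrt (Pk k t)"
  define y' where "y' \<equiv> (cos t * sqrt (Pk k t) - sin t * (inverse (sqrt (Pk k t)) / 2 * P')) / (sqrt (Pk k t))\<^sup>2"
  have dpos: "0 < d" using Dk_pos[OF assms(1,2)] by (simp add: d_def)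
  have c0: "0 \<le> c" using assms(3) by (simp add: c_def)
  have Ppos: "0 < P" using dpos c0 by (simp add: P_def Pk_def d_def c_def)
  have qpos: "0 < q" using Ppos by (simp add: q_def)
  have qq: "q\<^sup>2 = P" using Ppos by (simp add: q_def)
  have sc: "s\<^sup>2 + c\<^sup>2 = 1" by (simp add: s_def c_def)
  have dd: "d\<^sup>2 = 1 - k\<^sup>2 * s\<^sup>2" using Dk_sq[OF assms(1,2)] by (simp add: d_def s_def)
  have PP: "P = (d + c) * (1 + c)" by (simp add: P_def Pk_def d_def c_def)
  have P'd: "P' * d = (- (k\<^sup>2 * s * c) - s * d) * (1 + c) - (d + c) * s * d"
    using dpos by (simp add: P'_def s_def c_def d_def field_simps)
  have e4: "(2 * c * P - s * P') * d = P * (1 + d)" by (rule key_alg[OF sc dd PP P'd])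
  have hd: "(hk k has_real_derivative inverse (1 + y\<^sup>2) * y') (at t)"
    unfolding y_def y'_def P'_def by (rule hk_deriv[OF assms(1,2)]) (use Ppos P_def in simp)
  have yy: "y\<^sup>2 = s\<^sup>2 / P" using Ppos by (simp add: y_def s_def P_def power_divide)
  have Ps: "P + s\<^sup>2 = (1 + c) * (1 + d)" using sc PP by algebra
  have onepy: "1 + y\<^sup>2 = (1 + c) * (1 + d) / P" using yy Ps Ppos by (simp add: field_simps)
  have sinh: "(sin (hk k t))\<^sup>2 = s\<^sup>2 / (P + s\<^sup>2)"
  proof -
    have "(sin (hk k t))\<^sup>2 = y\<^sup>2 / (1 + y\<^sup>2)"
      by (simp add: hk_def sin_arctan power_divide y_def[symmetric] add_pos_nonneg)
    also have "\<dots> = s\<^sup>2 / (P + s\<^sup>2)" unfolding yy using Ppos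
      by (simp add: field_simps add_pos_nonneg)
    finally show ?thesis .
  qed
  have inner: "1 - k\<^sup>2 * (sin (hk k t))\<^sup>2 = (q / (1 + c))\<^sup>2"
  proof -
    have "1 - k\<^sup>2 * (sin (hk k t))\<^sup>2 = (P + s\<^sup>2 - k\<^sup>2 * s\<^sup>2) / (P + s\<^sup>2)"
    proof -
      have "0 < P + s\<^sup>2" using Ppos by (simp add: add_pos_nonneg)
      then show ?thesis using sinh by (simp add: field_simps)
    qed
    also have "P + s\<^sup>2 - k\<^sup>2 * s\<^sup>2 = (d + c) * (1 + d)" using sc dd PP by algebra
    also have "((d + c) * (1 + d)) / (P + s\<^sup>2) = P / (1 + c)\<^sup>2"
    proof -
      have "0 < 1 + c" "0 < 1 + d" using c0 dpos by auto
      then have "(1 + c) * (1 + d) \<noteq> 0" "(1 + c)\<^sup>2 \<noteq> 0" by auto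
      moreover have "(d + c) * (1 + d) * (1 + c)\<^sup>2 = (d + c) * (1 + c) * ((1 + c) * (1 + d))"
        by algebra
      ultimately show ?thesis unfolding Ps unfolding PP by (simp add: frac_eq_eq)
    qed
    finally show ?thesis using qq by (simp add: power_divide)
  qed
  have feh: "fe k (hk k t) = (1 + c) / q"
    using inner c0 qpos by (simp add: fe_def)
  have fet: "fe k t = 1 / d" by (simp add: fe_def d_def Dk_def)
  have y'e: "y' = (2 * c * P - s * P') / (2 * q * P)"
    using qpos qq by (simp add: y'_def P_def[symmetric] q_def[symmetric] s_def c_def field_simps power2_eq_square)
  have "((\<lambda>t. 2 * ellipticF k (hk k t) - ellipticF k t) has_real_derivative
          2 * (fe k (hk k t) * (inverse (1 + y\<^sup>2) * y')) - fe k t) (at t)"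
    by (intro DERIV_diff DERIV_cmult DERIV_chain2[OF F_deriv[OF assms(1,2)] hd] F_deriv[OF assms(1,2)])
  moreover have "2 * (fe k (hk k t) * (inverse (1 + y\<^sup>2) * y')) - fe k t = 0"
  proof -
    have "2 * (fe k (hk k t) * (inverse (1 + y\<^sup>2) * y')) =
          (2 * c * P - s * P') / (P * (1 + d))"
    proof -
      have "0 < 1 + c" "0 < 1 + d" using c0 dpos by auto
      then have "2 * ((1 + c) / q * (inverse ((1 + c) * (1 + d) / P) * ((2 * c * P - s * P') / (2 * q * P))))
          = (2 * c * P - s * P') / ((q * q) * (1 + d))"
        using qpos Ppos by (rule alg2)
      also have "q * q = P" using qq by (simp add: power2_eq_square)
      finally show ?thesis unfolding feh onepy y'e .
    qed
    also have "\<dots> = 1 / d"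
    proof -
      have "P * (1 + d) \<noteq> 0" using dpos Ppos by simp
      then show ?thesis using e4 dpos by (simp add: divide_simps)
    qed
    finally show ?thesis using fet by simp
  qed
  ultimately show ?thesis by simp
qed


lemma sin_arctan_sq: "(sin (arctan y))\<^sup>2 = y\<^sup>2 / (1 + y\<^sup>2)"
  by (simp add: sin_arctan power_divide add_pos_nonneg)

lemma half_F:
  assumes "0 < k" "k < 1" "0 \<le> t" "t \<le> pi/2"
  shows "2 * ellipticF k (hk k t) = ellipticF k t"
proof -
  let ?G = "\<lambda>t. 2 * ellipticF k (hk k t) - ellipticF k t"
  have der: "(?G has_real_derivative 0) (at x)" if "0 \<le> x" "x \<le> pi/2" for x
    by (rule half_deriv[OF assms(1,2)]) (rule cos_ge_zero, use that in auto)
  have "?G t = ?G 0"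
  proof (rule DERIV_isconst2[of 0 "pi/2"])
    show "continuous_on {0..pi/2} ?G"
      by (rule DERIV_atLeastAtMost_imp_continuous_on) (use der in blast)
  qed (use assms der in auto)
  moreover have "hk k 0 = 0" by (simp add: hk_def)
  ultimately show ?thesis by (simp add: F_0)
qed

lemma cos_pos_lt:
  assumes "0 < x" "x < pi" "0 < cos x" shows "x < pi/2"
proof (rule ccontr)
  assume "\<not> x < pi/2"
  then have "0 \<le> cos (pi - x)" by (intro cos_ge_zero) (use assms in auto)
  then show False using assms by simp
qed

lemma half_angle:
  assumes "0 < k" "k < 1" "0 \<le> jam k (2 * a)" "jam k (2 * a) \<le> pi/2"
  shows "(jsn k a)\<^sup>2 = (1 - jcn k (2 * a)) / (1 + jdn k (2 * a))"
proof -
  define t where "t = jam k (2 * a)"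
  have Ft: "ellipticF k t = 2 * a" using F_jam[OF assms(1,2)] by (simp add: t_def)
  have "2 * ellipticF k (hk k t) = 2 * a" using half_F[OF assms(1,2)] assms(3,4) Ft by (simp add: t_def)
  then have "ellipticF k (hk k t) = a" by simp
  then have ja: "jam k a = hk k t" using jam_F[OF assms(1,2)] by metis
  define s where "s = sin t"
  define c where "c = cos t"
  define d where "d = Dk k t"
  define P where "P = Pk k t"
  have dpos: "0 < d" using Dk_pos[OF assms(1,2)] by (simp add: d_def)
  have c0: "0 \<le> c" unfolding c_def by (rule cos_ge_zero) (use assms t_def in auto)
  have Ppos: "0 < P" using dpos c0 by (simp add: P_def Pk_def d_def c_def)
  have sc: "s\<^sup>2 + c\<^sup>2 = 1" by (simp add: s_def c_def)
  have PP: "P = (d + c) * (1 + c)" by (simp add: P_def Pk_def d_def c_def)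
  have Ps: "P + s\<^sup>2 = (1 + c) * (1 + d)" using sc PP by algebra
  have yy: "(sin t / sqrt (Pk k t))\<^sup>2 = s\<^sup>2 / P" using Ppos by (simp add: s_def P_def power_divide)
  have "(sin (hk k t))\<^sup>2 = s\<^sup>2 / (P + s\<^sup>2)"
  proof -
    have "(sin (hk k t))\<^sup>2 = (sin t / sqrt (Pk k t))\<^sup>2 / (1 + (sin t / sqrt (Pk k t))\<^sup>2)"
      unfolding hk_def by (rule sin_arctan_sq)
    also have "\<dots> = s\<^sup>2 / (P + s\<^sup>2)" unfolding yy using Ppos
      by (simp add: field_simps add_pos_nonneg)
    finally show ?thesis .
  qed
  also have "\<dots> = (1 - c) / (1 + d)"
  proof -
    have "0 < 1 + c" "0 < 1 + d" using c0 dpos by auto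
    then have "(1 + c) * (1 + d) \<noteq> 0" "1 + d \<noteq> 0" by auto
    moreover have "s\<^sup>2 * (1 + d) = (1 - c) * ((1 + c) * (1 + d))" using sc by algebra
    ultimately show ?thesis unfolding Ps by (simp add: frac_eq_eq)
  qed
  finally show ?thesis
    by (simp add: jsn_def jcn_def jdn_def ja c_def d_def Dk_def t_def)
qed


lemma part1:
  fixes z1 z2 z3 :: real
  assumes "0 < z3" "z3 < z2" "z2 < z1"
  shows "\<exists>!(\<alpha>, k). 0 < k \<and> k < 1 \<and> 0 < \<alpha> \<and> \<alpha> < ellipticK k \<and>
                 z2 = z1 * jdn k (2 * \<alpha>) \<and> z3 = z1 * jcn k (2 * \<alpha>)"
proof -
  define c where "c = z3 / z1"
  define d where "d = z2 / z1"
  have z1: "0 < z1" using assms by simp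
  have c0: "0 < c" "c < d" "d < 1" using assms z1 by (auto simp: c_def d_def field_simps)
  define k0 where "k0 = sqrt ((1 - d\<^sup>2) / (1 - c\<^sup>2))"
  define \<sigma> where "\<sigma> = arccos c"
  have cc: "c\<^sup>2 < d\<^sup>2" "d\<^sup>2 < 1" using c0 by (auto intro: power_strict_mono simp: power_less_one_iff)
  have r: "0 < (1 - d\<^sup>2) / (1 - c\<^sup>2)" "(1 - d\<^sup>2) / (1 - c\<^sup>2) < 1" using cc by (auto simp: field_simps)
  have k0: "0 < k0" "k0 < 1" using r by (auto simp: k0_def)
  have k0sq: "k0\<^sup>2 = (1 - d\<^sup>2) / (1 - c\<^sup>2)" using r by (simp add: k0_def)
  have sg: "0 < \<sigma>" "\<sigma> < pi" using arccos_lt_bounded[of c] c0 by (auto simp: \<sigma>_def)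
  have cs: "cos \<sigma> = c" using c0 by (simp add: \<sigma>_def)
  have sg2: "\<sigma> < pi/2" using cos_pos_lt[OF sg] cs c0 by simp
  define \<alpha>0 where "\<alpha>0 = ellipticF k0 \<sigma> / 2"
  have Fpos: "0 < ellipticF k0 \<sigma>" using F_strict[OF k0 sg(1)] F_0 by simp
  have FK: "ellipticF k0 \<sigma> < ellipticK k0" using F_strict[OF k0 sg2] by (simp add: ellipticK_def)
  have sin2: "(sin \<sigma>)\<^sup>2 = 1 - c\<^sup>2" using cs sin_cos_squared_add[of \<sigma>] by simp
  have ja: "jam k0 (2 * \<alpha>0) = \<sigma>" using jam_F[OF k0] by (simp add: \<alpha>0_def)
  have "jdn k0 (2 * \<alpha>0) = d"
  proof -
    have "1 - k0\<^sup>2 * (sin \<sigma>)\<^sup>2 = d\<^sup>2" using cc unfolding sin2 k0sq by (simp add: field_simps)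
    then show ?thesis using c0 by (simp add: jdn_def jsn_def ja)
  qed
  moreover have "jcn k0 (2 * \<alpha>0) = c" by (simp add: jcn_def ja cs)
  ultimately have ex: "0 < k0 \<and> k0 < 1 \<and> 0 < \<alpha>0 \<and> \<alpha>0 < ellipticK k0 \<and>
                 z2 = z1 * jdn k0 (2 * \<alpha>0) \<and> z3 = z1 * jcn k0 (2 * \<alpha>0)"
    using k0 Fpos FK z1 by (simp add: \<alpha>0_def c_def d_def)
  have un: "a = \<alpha>0 \<and> k = k0" if h: "0 < k \<and> k < 1 \<and> 0 < a \<and> a < ellipticK k \<and>
                 z2 = z1 * jdn k (2 * a) \<and> z3 = z1 * jcn k (2 * a)" for a k
  proof -
    have k: "0 < k" "k < 1" using h by auto
    define s' where "s' = jam k (2 * a)"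
    have s'r: "0 < s'" "s' < pi" using jam_range[OF k, of "2 * a"] h by (auto simp: s'_def)
    have cs': "cos s' = c" using h z1 by (simp add: c_def jcn_def s'_def)
    have eqs: "s' = \<sigma>" using arccos_cos[of s'] s'r cs' by (simp add: \<sigma>_def)
    have dd: "sqrt (1 - k\<^sup>2 * (sin \<sigma>)\<^sup>2) = d" using h z1 eqs by (simp add: d_def jdn_def jsn_def s'_def)
    then have "1 - k\<^sup>2 * (sin \<sigma>)\<^sup>2 = d\<^sup>2" using inner_pos[OF k, of \<sigma>] by (metis real_sqrt_pow2 less_imp_le)
    then have "k\<^sup>2 = (1 - d\<^sup>2) / (1 - c\<^sup>2)" using cc unfolding sin2 by (simp add: field_simps)
    then have "k\<^sup>2 = k0\<^sup>2" using k0sq by simp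
    then have kk: "k = k0" using k k0 by (simp add: power2_eq_iff)
    have "ellipticF k s' = 2 * a" using F_jam[OF k] by (simp add: s'_def)
    then show ?thesis using eqs kk by (simp add: \<alpha>0_def)
  qed
  show ?thesis
  proof (rule ex1I[of _ "(\<alpha>0, k0)"])
    show "case (\<alpha>0, k0) of (\<alpha>, k) \<Rightarrow> 0 < k \<and> k < 1 \<and> 0 < \<alpha> \<and> \<alpha> < ellipticK k \<and>
                 z2 = z1 * jdn k (2 * \<alpha>) \<and> z3 = z1 * jcn k (2 * \<alpha>)"
      using ex by (simp only: prod.case)
  next
    fix p assume H: "case p of (\<alpha>, k) \<Rightarrow> 0 < k \<and> k < 1 \<and> 0 < \<alpha> \<and> \<alpha> < ellipticK k \<and>
                 z2 = z1 * jdn k (2 * \<alpha>) \<and> z3 = z1 * jcn k (2 * \<alpha>)"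
    obtain a b where p: "p = (a, b)" by (cases p)
    have "a = \<alpha>0 \<and> b = k0" by (rule un) (use H p in \<open>simp only: prod.case\<close>)
    then show "p = (\<alpha>0, k0)" using p by simp
  qed
qed

lemma part2:
  fixes z1 z3 \<alpha> k :: real
  assumes "0 < z3" "z3 < z1" "0 < k" "k < 1" "0 < \<alpha>" "\<alpha> < ellipticK k" "z3 = z1 * jcn k (2 * \<alpha>)"
  shows "sqrt (z1\<^sup>2 - z3\<^sup>2) = z1 * jsn k (2 * \<alpha>)"
proof -
  define s where "s = jam k (2 * \<alpha>)"
  have sr: "0 < s" "s < pi" using jam_range[OF assms(3,4), of "2 * \<alpha>"] assms by (auto simp: s_def)
  have e1: "jcn k (2 * \<alpha>) = cos s" "jsn k (2 * \<alpha>) = sin s" by (simp_all add: jcn_def jsn_def s_def)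
  have "0 < sin s" using sin_gt_zero[OF sr] .
  moreover have "z1\<^sup>2 - z3\<^sup>2 = (z1 * sin s)\<^sup>2"
  proof -
    have "z1\<^sup>2 - z3\<^sup>2 = z1\<^sup>2 * ((sin s)\<^sup>2 + (cos s)\<^sup>2) - z3\<^sup>2" by (simp only: sin_cos_squared_add mult_1_right)
    also have "\<dots> = (z1 * sin s)\<^sup>2" unfolding assms(7) e1
      by (simp add: power_mult_distrib distrib_left del: sin_cos_squared_add)
    finally show ?thesis .
  qed
  moreover have "0 < z1" using assms by simp
  ultimately show ?thesis unfolding e1 by simp
qed

lemma final_alg0:
  fixes A B e :: real
  assumes "0 < A" "0 < A - B"
  shows "2 * A * e / (A - B) - e = e * (1 + B / A) / (1 - B / A)"
proof -
  have 1: "1 + B / A = (A + B) / A" "1 - B / A = (A - B) / A" using assms by (simp_all add: field_simps)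
  have 2: "e * ((A + B) / A) / ((A - B) / A) = e * (A + B) / (A - B)" using assms by simp
  have 3: "2 * A * e / (A - B) - e = e * (A + B) / (A - B)"
  proof -
    have "A - B \<noteq> 0" using assms by simp
    then show ?thesis by (simp add: divide_simps) (simp add: algebra_simps)
  qed
  show ?thesis unfolding 1 2 3 ..
qed

lemma final_alg:
  fixes c d Y :: real
  assumes "0 < c" "0 < d" "d < 1" "0 \<le> Y" "Y \<le> 1"
  shows "2 * (1 + c) * (d + c) / ((1 + c) - (1 - d) * Y) - 1 - d - c =
         (d + c) * (1 + (1 - d) / (1 + c) * Y) / (1 - (1 - d) / (1 + c) * Y) - 1"
proof -
  have "(1 - d) * Y \<le> 1 - d" using assms by (simp add: mult_left_le)
  also have "1 - d < 1 + c" using assms by simp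
  finally have p1: "0 < (1 + c) - (1 - d) * Y" using assms by simp
  have A: "0 < 1 + c" using assms by simp
  have eq: "(1 - d) / (1 + c) * Y = (1 - d) * Y / (1 + c)" by simp
  show ?thesis unfolding eq using final_alg0[OF A p1, of "d + c"] by linarith
qed

lemma part3:
  fixes z2 z3 \<alpha> k x :: real
  assumes "0 < z3" "z3 < z2" "z2 < 1" "0 < k" "k < 1" "0 < \<alpha>" "\<alpha> < ellipticK k"
    "z2 = jdn k (2 * \<alpha>)" "z3 = jcn k (2 * \<alpha>)"
  shows "profile 1 z2 z3 x =
                 (jdn k (2 * \<alpha>) + jcn k (2 * \<alpha>)) *
                 (1 + k\<^sup>2 * (jsn k \<alpha>)\<^sup>2 * (jsn k (jsn k (2 * \<alpha>) * x))\<^sup>2) /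
                 (1 - k\<^sup>2 * (jsn k \<alpha>)\<^sup>2 * (jsn k (jsn k (2 * \<alpha>) * x))\<^sup>2) - 1"
proof -
  have k: "0 < k" "k < 1" using assms by auto
  define t where "t = jam k (2 * \<alpha>)"
  define s where "s = sin t"
  define c where "c = z3"
  define d where "d = z2"
  have tr: "0 < t" "t < pi" using jam_range[OF k, of "2 * \<alpha>"] assms by (auto simp: t_def)
  have ct: "cos t = c" using assms by (simp add: c_def jcn_def t_def)
  have t2: "t < pi/2" using cos_pos_lt[OF tr] ct assms by (simp add: c_def)
  have spos: "0 < s" using sin_gt_zero[OF tr] by (simp add: s_def)
  have sc: "s\<^sup>2 = 1 - c\<^sup>2" using sin_cos_squared_add[of t] ct by (simp add: s_def)
  have dd: "d\<^sup>2 = 1 - k\<^sup>2 * s\<^sup>2" using assms inner_pos[OF k, of t]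
    by (simp add: d_def jdn_def jsn_def s_def t_def[symmetric])
  have jsn2: "jsn k (2 * \<alpha>) = s" by (simp add: jsn_def s_def t_def)
  have m: "sqrt ((1 - d\<^sup>2) / (1 - c\<^sup>2)) = k"
  proof -
    have "0 < s\<^sup>2" using spos by simp
    have "(1 - d\<^sup>2) / (1 - c\<^sup>2) = (k\<^sup>2 * s\<^sup>2) / s\<^sup>2" using dd sc by simp
    with \<open>0 < s\<^sup>2\<close> have "(1 - d\<^sup>2) / (1 - c\<^sup>2) = k\<^sup>2" by simp
    then show ?thesis using k by simp
  qed
  have nu: "sqrt (1 - c\<^sup>2) = s" using spos sc by (metis real_sqrt_unique less_imp_le)
  have ha: "(jsn k \<alpha>)\<^sup>2 = (1 - c) / (1 + d)"
    using half_angle[OF k, of \<alpha>] tr t2 assms by (simp add: t_def c_def d_def)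
  have c0: "0 < c" "0 < d" "d < 1" using assms by (auto simp: c_def d_def)
  have kha: "k\<^sup>2 * (jsn k \<alpha>)\<^sup>2 = (1 - d) / (1 + c)"
  proof -
    have "k\<^sup>2 * (1 - c) * (1 + c) = (1 - d) * (1 + d)" using dd sc by algebra
    then show ?thesis unfolding ha using c0 by (simp add: field_simps)
  qed
  define Y where "Y = (jsn k (s * x))\<^sup>2"
  have Y: "0 \<le> Y" "Y \<le> 1" by (auto simp: Y_def jsn_def abs_square_le_1)
  have "profile 1 z2 z3 x = 2 * (1 + c) * (d + c) / ((1 + c) - (1 - d) *
      (jsn (sqrt ((1 - d\<^sup>2) / (1 - c\<^sup>2))) (sqrt (1 - c\<^sup>2) * x))\<^sup>2) - 1 - d - c"
    by (simp only: profile_def Let_def power_one c_def d_def mult_1_left mult_1_right)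
  also have "\<dots> = 2 * (1 + c) * (d + c) / ((1 + c) - (1 - d) * Y) - 1 - d - c"
    by (simp only: m nu Y_def)
  also have "\<dots> = (d + c) * (1 + (1 - d) / (1 + c) * Y) / (1 - (1 - d) / (1 + c) * Y) - 1"
    by (rule final_alg[OF c0 Y])
  also have "(1 - d) / (1 + c) * Y = k\<^sup>2 * (jsn k \<alpha>)\<^sup>2 * (jsn k (jsn k (2 * \<alpha>) * x))\<^sup>2"
    by (simp only: kha jsn2 Y_def)
  also have "d + c = jdn k (2 * \<alpha>) + jcn k (2 * \<alpha>)" using assms by (simp add: c_def d_def)
  finally show ?thesis .
qed

theorem corollary1:
  shows "(\<forall>z1 z2 z3 :: real. 0 < z3 \<and> z3 < z2 \<and> z2 < z1 \<longrightarrow>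
            (\<exists>!(\<alpha>, k). 0 < k \<and> k < 1 \<and> 0 < \<alpha> \<and> \<alpha> < ellipticK k \<and>
                 z2 = z1 * jdn k (2 * \<alpha>) \<and> z3 = z1 * jcn k (2 * \<alpha>)))
       \<and> (\<forall>z1 z2 z3 \<alpha> k :: real. 0 < z3 \<and> z3 < z2 \<and> z2 < z1 \<and>
            0 < k \<and> k < 1 \<and> 0 < \<alpha> \<and> \<alpha> < ellipticK k \<and>
            z2 = z1 * jdn k (2 * \<alpha>) \<and> z3 = z1 * jcn k (2 * \<alpha>) \<longrightarrow>
              sqrt (z1\<^sup>2 - z3\<^sup>2) = z1 * jsn k (2 * \<alpha>))
       \<and> (\<forall>z2 z3 \<alpha> k :: real. 0 < z3 \<and> z3 < z2 \<and> z2 < 1 \<and>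
            0 < k \<and> k < 1 \<and> 0 < \<alpha> \<and> \<alpha> < ellipticK k \<and>
            z2 = jdn k (2 * \<alpha>) \<and> z3 = jcn k (2 * \<alpha>) \<longrightarrow>
              (\<forall>x :: real. profile 1 z2 z3 x =
                 (jdn k (2 * \<alpha>) + jcn k (2 * \<alpha>)) *
                 (1 + k\<^sup>2 * (jsn k \<alpha>)\<^sup>2 * (jsn k (jsn k (2 * \<alpha>) * x))\<^sup>2) /
                 (1 - k\<^sup>2 * (jsn k \<alpha>)\<^sup>2 * (jsn k (jsn k (2 * \<alpha>) * x))\<^sup>2) - 1))"
proof (intro conjI allI impI)
  fix z1 z2 z3 :: real assume "0 < z3 \<and> z3 < z2 \<and> z2 < z1"
  then show "\<exists>!(\<alpha>, k). 0 < k \<and> k < 1 \<and> 0 < \<alpha> \<and> \<alpha> < ellipticK k \<and>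
                 z2 = z1 * jdn k (2 * \<alpha>) \<and> z3 = z1 * jcn k (2 * \<alpha>)"
    using part1 by blast
next
  fix z1 z2 z3 \<alpha> k :: real
  assume "0 < z3 \<and> z3 < z2 \<and> z2 < z1 \<and>
            0 < k \<and> k < 1 \<and> 0 < \<alpha> \<and> \<alpha> < ellipticK k \<and>
            z2 = z1 * jdn k (2 * \<alpha>) \<and> z3 = z1 * jcn k (2 * \<alpha>)"
  then have "0 < z3" "z3 < z1" "0 < k" "k < 1" "0 < \<alpha>" "\<alpha> < ellipticK k" "z3 = z1 * jcn k (2 * \<alpha>)"
    by linarith+
  then show "sqrt (z1\<^sup>2 - z3\<^sup>2) = z1 * jsn k (2 * \<alpha>)"
    by (rule part2)
next
  fix z2 z3 \<alpha> k x :: real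
  assume "0 < z3 \<and> z3 < z2 \<and> z2 < 1 \<and>
            0 < k \<and> k < 1 \<and> 0 < \<alpha> \<and> \<alpha> < ellipticK k \<and>
            z2 = jdn k (2 * \<alpha>) \<and> z3 = jcn k (2 * \<alpha>)"
  then show "profile 1 z2 z3 x =
                 (jdn k (2 * \<alpha>) + jcn k (2 * \<alpha>)) *
                 (1 + k\<^sup>2 * (jsn k \<alpha>)\<^sup>2 * (jsn k (jsn k (2 * \<alpha>) * x))\<^sup>2) /
                 (1 - k\<^sup>2 * (jsn k \<alpha>)\<^sup>2 * (jsn k (jsn k (2 * \<alpha>) * x))\<^sup>2) - 1"
    using part3 by blast
qed

end
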